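(* Let $\gamma>0$, $b\ge0$, $t_0\in\mathbb{R}$, and let $\beta\ge0$ be arbitrary. Let $w_n$ ($n\ge0$) be defined on $[0,\infty)\times\mathbb{R}$ by $w_n(x_3,t)=0$ for $t\le t_0$ and, for $t>t_0$, \[ w_0(x_3,t)=\frac{1}{4(\pi\gamma)^{3/2}\sqrt{t-t_0}}e^{-\frac{x_3^2}{4\gamma(t-t_0)}},\qquad w_n(x_3,t)=\frac{-\beta}{\sqrt{\pi\gamma}}\int_{t_0}^t\frac{w_{n-1}(0,s)}{\sqrt{t-s}}e^{-\frac{x_3^2}{4\gamma(t-s)}}\,ds\ \ (n\ge1). \] Then the series $\sum_{n=0}^\infty w_n(x_3,t)$ converges absolutely and locally uniformly on $[0,\infty)\times(t_0,\infty)$. Consequently the series $\sum_{n=0}^\infty v_n(x,t)$ with $v_n(x,t)=\frac{e^{-b(t-t_0)}}{t-t_0}e^{-\frac{x_1^2+x_2^2}{4\gamma(t-t_0)}}w_n(x_3,t)$ converges absolutely and locally uniformly on $\overline{\mathbb{R}^3_+}\times(t_0,\infty)$, regardless of the value of $\beta$.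
   Context: $\overline{\mathbb{R}^3_+}=\{x\in\mathbb{R}^3:x_3\ge0\}$. The $v_n$ are the terms of the Born series (Robin impedance term $\beta u$ treated as a perturbation of the Neumann problem) for the half-space diffusion equation $(\partial_t-\gamma\Delta+b)u=0$ with boundary condition $\gamma\partial_\nu u+\beta u=\delta(x_1)\delta(x_2)\delta(t-t_0)$. *)

theory Defs
  imports "HOL-Analysis.Analysis"
begin

primrec bornW :: "real \<Rightarrow> real \<Rightarrow> real \<Rightarrow> nat \<Rightarrow> real \<Rightarrow> real \<Rightarrow> real" where
  "bornW \<gamma> \<beta> t0 0 x3 t =
     (if t \<le> t0 then 0
      else 1 / (4 * (pi * \<gamma>) powr (3/2) * sqrt (t - t0)) * exp (- (x3^2) / (4 * \<gamma> * (t - t0))))"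
| "bornW \<gamma> \<beta> t0 (Suc n) x3 t =
     (if t \<le> t0 then 0
      else (- \<beta> / sqrt (pi * \<gamma>)) *
        (LBINT s=t0..t. bornW \<gamma> \<beta> t0 n 0 s / sqrt (t - s) * exp (- (x3^2) / (4 * \<gamma> * (t - s)))))"

definition bornV :: "real \<Rightarrow> real \<Rightarrow> real \<Rightarrow> real \<Rightarrow> nat \<Rightarrow> real^3 \<Rightarrow> real \<Rightarrow> real" where
  "bornV \<gamma> b \<beta> t0 n x t =
     exp (- b * (t - t0)) / (t - t0) * exp (- ((x$1)^2 + (x$2)^2) / (4 * \<gamma> * (t - t0)))
       * bornW \<gamma> \<beta> t0 n (x$3) t"

text \<open>A series of real functions converges absolutely (pointwise) and locally uniformly on D:
  pointwise absolute summability, and uniform convergence of the partial sums on every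
  compact subset of D (D is locally compact here).\<close>
definition abs_loc_unif_series :: "(nat \<Rightarrow> 'a::metric_space \<Rightarrow> real) \<Rightarrow> 'a set \<Rightarrow> bool" where
  "abs_loc_unif_series f D \<longleftrightarrow>
     (\<forall>p\<in>D. summable (\<lambda>n. \<bar>f n p\<bar>)) \<and>
     (\<forall>K. compact K \<and> K \<subseteq> D \<longrightarrow>
        uniform_limit K (\<lambda>N p. \<Sum>n<N. f n p) (\<lambda>p. \<Sum>n. f n p) sequentially)"

end

theory Submission
  imports Defs
begin

lemma Gamma_half_step:
  fixes n :: nat
  shows "Gamma ((real (Suc (Suc n)) + 1) / 2) = ((real n + 1)/2) * Gamma ((real n + 1)/2)"
proof -
  have e: "(real (Suc (Suc n)) + 1) / 2 = (real n + 1)/2 + 1" by simp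
  have nz: "(real n + 1)/2 \<notin> \<int>\<^sub>\<le>\<^sub>0"
  proof
    assume "(real n + 1)/2 \<in> \<int>\<^sub>\<le>\<^sub>0"
    then have "(real n + 1)/2 \<le> 0" by (rule nonpos_Ints_nonpos)
    then show False by simp
  qed
  show ?thesis by (subst e) (rule Gamma_plus1[OF nz])
qed

lemma summable_gamma:
  fixes K :: real
  assumes K: "K \<ge> 0"
  shows "summable (\<lambda>n. K^n / Gamma ((real n + 1)/2))"
proof -
  define u where "u n = K^n / Gamma ((real n + 1)/2)" for n
  have u0: "u n \<ge> 0" for n unfolding u_def using K by (intro divide_nonneg_pos) auto
  have rec: "u (Suc (Suc n)) = (2*K^2/(real n+1)) * u n" for n
  proof -
    have g: "Gamma ((real n + 1)/2) > 0" by simp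
    show ?thesis unfolding u_def Gamma_half_step using g
      by (simp add: field_simps power2_eq_square)
  qed
  obtain N :: nat where N: "8*K^2 \<le> real N" using real_arch_simple by blast
  define D where "D = Max ((\<lambda>n. u n * 2^n) ` {..Suc N})"
  have bound: "u n \<le> D / 2^n" for n
  proof (induction n rule: less_induct)
    case (less n)
    show ?case
    proof (cases "n \<le> Suc N")
      case True
      then have "u n * 2^n \<le> D" unfolding D_def by (intro Max_ge) auto
      then show ?thesis by (simp add: field_simps)
    next
      case False
      define m where "m = n - 2"
      have m: "n = Suc (Suc m)" using False unfolding m_def by simp
      have mN: "m \<ge> N" using False unfolding m_def by simp
      have IH: "u m \<le> D / 2^m" using less m by simp
      have c: "2*K^2/(real m+1) \<le> 1/4"
      proof -
        have "8*K^2 \<le> real m + 1" using N mN by linarith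
        then show ?thesis by (simp add: field_simps)
      qed
      have "u n = (2*K^2/(real m+1)) * u m" using m rec by simp
      also have "\<dots> \<le> (1/4) * u m" using c u0[of m] by (intro mult_right_mono) auto
      also have "\<dots> \<le> (1/4) * (D / 2^m)" using IH by simp
      also have "\<dots> = D / 2^n" using m by (simp add: field_simps)
      finally show ?thesis .
    qed
  qed
  have nb: "norm (K^n / Gamma ((real n + 1)/2)) \<le> D * (1/2)^n" for n
  proof -
    have "norm (K^n / Gamma ((real n + 1)/2)) = u n" using u0[of n] K by (simp add: u_def)
    also have "\<dots> \<le> D / 2^n" by (rule bound)
    also have "\<dots> = D * (1/2)^n" by (simp add: power_divide)
    finally show ?thesis .
  qed
  have "summable (\<lambda>n. D * (1/2)^n)" by (intro summable_mult summable_geometric) simp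
  then show ?thesis
    by (rule summable_comparison_test[rotated]) (use nb in blast)
qed

lemma beta_scaled:
  fixes t0 t p :: real
  assumes tt: "t0 < t" and p: "p > -1"
  shows "((\<lambda>s. (s - t0) powr p * (t - s) powr (-1/2)) has_integral
           (t - t0) powr (p + 1/2) * Beta (p+1) (1/2)) {t0..t}"
proof -
  define \<tau> where "\<tau> = t - t0"
  have tp: "\<tau> > 0" using tt unfolding \<tau>_def by simp
  define h where "h u = u powr p * (1 - u) powr (-1/2)" for u :: real
  have hB: "(h has_integral Beta (p+1) (1/2)) (cbox 0 1)"
    using has_integral_Beta_real[of "p+1" "1/2"] p unfolding h_def by (simp add: cbox_interval)
  have aff: "((\<lambda>x. h ((1/\<tau>) *\<^sub>R x + (- t0/\<tau>))) has_integral (Beta (p+1) (1/2) /\<^sub>R (1/\<tau>) ^ DIM(real)))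
      (cbox ((0 - (- t0/\<tau>)) /\<^sub>R (1/\<tau>)) ((1 - (- t0/\<tau>)) /\<^sub>R (1/\<tau>)))"
    by (rule has_integral_affinity'[OF hB]) (use tp in simp)
  have e1: "cbox ((0 - (- t0/\<tau>)) /\<^sub>R (1/\<tau>)) ((1 - (- t0/\<tau>)) /\<^sub>R (1/\<tau>)) = {t0..t}"
    using tp unfolding \<tau>_def by (simp add: cbox_interval field_simps)
  have e2: "Beta (p+1) (1/2) /\<^sub>R (1/\<tau>) ^ DIM(real) = \<tau> * Beta (p+1) (1/2)" by simp
  have aff2: "((\<lambda>x. h ((1/\<tau>) *\<^sub>R x + (- t0/\<tau>))) has_integral (\<tau> * Beta (p+1) (1/2))) {t0..t}"
    using aff unfolding e1 e2 .
  have m: "((\<lambda>x. \<tau> powr (p - 1/2) * h ((1/\<tau>) *\<^sub>R x + (- t0/\<tau>))) has_integral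
            (\<tau> powr (p - 1/2) * (\<tau> * Beta (p+1) (1/2)))) {t0..t}"
    by (rule has_integral_mult_right[OF aff2])
  have val: "\<tau> powr (p - 1/2) * (\<tau> * Beta (p+1) (1/2)) = (t - t0) powr (p + 1/2) * Beta (p+1) (1/2)"
  proof -
    have "\<tau> powr (p + 1/2) = \<tau> powr ((p - 1/2) + 1)" by (simp add: add.commute)
    also have "\<dots> = \<tau> powr (p - 1/2) * \<tau> powr 1" by (rule powr_add)
    also have "\<dots> = \<tau> powr (p - 1/2) * \<tau>" using tp by simp
    finally have "\<tau> powr (p - 1/2) * \<tau> = \<tau> powr (p + 1/2)" by simp
    then show ?thesis unfolding \<tau>_def by (simp add: mult.assoc[symmetric])
  qed
  have pt: "\<tau> powr (p - 1/2) * h ((1/\<tau>) *\<^sub>R x + (- t0/\<tau>)) = (x - t0) powr p * (t - x) powr (-1/2)"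
    if x: "x \<in> {t0..t}" for x
  proof -
    have a1: "(1/\<tau>) *\<^sub>R x + (- t0/\<tau>) = (x - t0) / \<tau>" by (simp add: diff_divide_distrib)
    have a2: "1 - (x - t0) / \<tau> = (t - x) / \<tau>" using tp unfolding \<tau>_def by (simp add: field_simps)
    have x0: "x - t0 \<ge> 0" "t - x \<ge> 0" using x by auto
    have "\<tau> powr (p - 1/2) * h ((1/\<tau>) *\<^sub>R x + (- t0/\<tau>))
        = \<tau> powr (p - 1/2) * ((x - t0) powr p / \<tau> powr p * ((t - x) powr (-1/2) / \<tau> powr (-1/2)))"
      unfolding h_def a1 a2 using x0 tp by (simp add: powr_divide)
    also have "\<dots> = (x - t0) powr p * (t - x) powr (-1/2) * (\<tau> powr (p - 1/2) / (\<tau> powr p * \<tau> powr (-1/2)))"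
      by (simp add: field_simps)
    also have "\<tau> powr p * \<tau> powr (-1/2) = \<tau> powr (p - 1/2)"
      by (simp add: powr_add[symmetric])
    also have "\<tau> powr (p - 1/2) / \<tau> powr (p - 1/2) = 1" using tp by simp
    finally show ?thesis by simp
  qed
  show ?thesis
    using m unfolding val by (rule has_integral_eq[rotated]) (use pt in auto)
qed

lemma lbint_bound:
  fixes F :: "real \<Rightarrow> real" and t0 t p c :: real
  assumes tt: "t0 < t" and p: "p > -1" and c: "c \<ge> 0"
    and Fb: "\<And>s. t0 < s \<Longrightarrow> s < t \<Longrightarrow> \<bar>F s\<bar> \<le> c * ((s - t0) powr p * (t - s) powr (-1/2))"
  shows "\<bar>LBINT s=t0..t. F s\<bar> \<le> c * ((t - t0) powr (p + 1/2) * Beta (p+1) (1/2))"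
proof -
  define g where "g s = c * ((s - t0) powr p * (t - s) powr (-1/2))" for s
  define V where "V = c * ((t - t0) powr (p + 1/2) * Beta (p+1) (1/2))"
  define G where "G s = indicator {t0..t} s * g s" for s :: real
  have hg: "(g has_integral V) {t0..t}"
    unfolding g_def V_def by (rule has_integral_mult_right[OF beta_scaled[OF tt p]])
  have g0: "0 \<le> g s" for s unfolding g_def using c by simp
  have G0: "0 \<le> G s" for s unfolding G_def using g0 by simp
  have V0: "0 \<le> V" using has_integral_nonneg[OF hg] g0 by auto
  have nn: "(\<integral>\<^sup>+x. ennreal (G x) \<partial>lborel) = ennreal V"
  proof -
    have "(\<integral>\<^sup>+x. ennreal (G x) \<partial>lborel) = (\<integral>\<^sup>+x. ennreal (g x) * indicator {t0..t} x \<partial>lborel)"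
      by (intro nn_integral_cong) (auto simp: G_def split: split_indicator)
    also have "\<dots> = ennreal V" using nn_integral_has_integral_lebesgue'[OF _ hg] g0 by blast
    finally show ?thesis .
  qed
  have meas: "G \<in> borel_measurable lborel" unfolding G_def g_def by measurable
  have hb: "has_bochner_integral lborel G V"
    by (rule has_bochner_integral_nn_integral[OF meas _ V0 nn]) (use G0 in auto)
  have intG: "integrable lborel G" and valG: "integral\<^sup>L lborel G = V"
    using hb unfolding has_bochner_integral_iff by auto
  have eq: "(LBINT s=t0..t. F s) = integral\<^sup>L lborel (\<lambda>s. indicator {t0<..<t} s *\<^sub>R F s)"
    using tt by (simp add: interval_integral_Ioo set_lebesgue_integral_def)
  have pw: "norm (indicator {t0<..<t} s *\<^sub>R F s) \<le> G s" for s
  proof (cases "t0 < s \<and> s < t")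
    case True
    then show ?thesis using Fb[of s] by (simp add: G_def g_def indicator_def)
  next
    case False
    then show ?thesis using G0[of s] by (auto simp: indicator_def)
  qed
  have "\<bar>LBINT s=t0..t. F s\<bar> \<le> (\<integral>s. norm (indicator {t0<..<t} s *\<^sub>R F s) \<partial>lborel)"
    unfolding eq using integral_norm_bound[of lborel "\<lambda>s. indicator {t0<..<t} s *\<^sub>R F s"] by simp
  also have "\<dots> \<le> integral\<^sup>L lborel G"
    by (rule integral_mono'[OF intG]) (use pw G0 in auto)
  finally show ?thesis using valG unfolding V_def by simp
qed

definition Mc :: "real \<Rightarrow> real \<Rightarrow> nat \<Rightarrow> real" where
  "Mc \<gamma> \<beta> n = 1 / (4 * (pi * \<gamma>) powr (3/2)) * (\<beta> / sqrt (pi * \<gamma>) * sqrt pi) ^ n * sqrt pi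
      / Gamma ((real n + 1) / 2)"

lemma Mc_nonneg: "\<gamma> > 0 \<Longrightarrow> \<beta> \<ge> 0 \<Longrightarrow> Mc \<gamma> \<beta> n \<ge> 0"
  unfolding Mc_def by (intro divide_nonneg_pos mult_nonneg_nonneg zero_le_power) auto

lemma Mc_Suc_aux:
  fixes C a s G1 G2 :: real and n :: nat
  assumes "G1 \<noteq> 0"
  shows "C * (a * s) ^ Suc n * s / G2 = a * (G1 * s / G2) * (C * (a * s) ^ n * s / G1)"
  using assms by (simp add: divide_simps)

lemma Mc_Suc: "Mc \<gamma> \<beta> (Suc n) = \<beta> / sqrt (pi * \<gamma>) * Beta ((real n + 1)/2) (1/2) * Mc \<gamma> \<beta> n"
proof -
  have e: "(real n + 1)/2 + 1/2 = (real (Suc n) + 1) / 2" by simp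
  have g1: "Gamma ((real n + 1)/2) \<noteq> 0" by (intro Gamma_real_pos[THEN less_imp_neq, symmetric]) simp
  have B: "Beta ((real n + 1)/2) (1/2) = Gamma ((real n + 1)/2) * sqrt pi / Gamma ((real (Suc n) + 1) / 2)"
    unfolding Beta_def Gamma_one_half_real e by (rule refl)
  show ?thesis unfolding B Mc_def by (rule Mc_Suc_aux[OF g1])
qed

lemma powr_mhalf: "(x::real) > 0 \<Longrightarrow> x powr (-1/2) = 1 / sqrt x"
proof -
  assume x: "x > 0"
  have h: "(-1/2::real) = -(1/2)" by (simp only: minus_divide_left)
  have s: "x powr (1/2) = sqrt x" by (rule powr_half_sqrt) (use x in linarith)
  have "x powr (-1/2) = inverse (x powr (1/2))" unfolding h by (rule powr_minus)
  also have "\<dots> = 1 / sqrt x" unfolding s by (rule inverse_eq_divide)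
  finally show ?thesis .
qed

lemma exp_neg_le1:
  fixes q d :: real assumes q: "q \<ge> 0" and d: "d > 0"
  shows "exp (- q / d) \<le> 1" "exp (- q / d) > 0"
proof -
  have "q / d \<ge> 0" by (rule divide_nonneg_pos[OF q d])
  moreover have "- q / d = - (q / d)" by (rule minus_divide_left[symmetric])
  ultimately have "- q / d \<le> 0" by linarith
  then show "exp (- q / d) \<le> 1" by (subst exp_le_one_iff)
  show "exp (- q / d) > 0" by (rule exp_gt_zero)
qed

lemma w_bound:
  fixes \<gamma> \<beta> t0 :: real
  assumes g: "\<gamma> > 0" and b: "\<beta> \<ge> 0"
  shows "t0 < t \<Longrightarrow> \<bar>bornW \<gamma> \<beta> t0 n x3 t\<bar> \<le> Mc \<gamma> \<beta> n * (t - t0) powr ((real n - 1)/2)"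
proof (induction n arbitrary: x3 t)
  case 0
  define A where "A = 4 * (pi * \<gamma>) powr (3/2)"
  have A: "A > 0" unfolding A_def using g by simp
  have tp: "t - t0 > 0" using 0 by simp
  have ex: "exp (- (x3^2) / (4 * \<gamma> * (t - t0))) \<le> 1" "exp (- (x3^2) / (4 * \<gamma> * (t - t0))) > 0"
    using exp_neg_le1[of "x3^2" "4 * \<gamma> * (t - t0)"] g tp by auto
  have w: "bornW \<gamma> \<beta> t0 0 x3 t = 1 / (A * sqrt (t - t0)) * exp (- (x3^2) / (4 * \<gamma> * (t - t0)))"
    using 0 by (simp add: A_def)
  have pos: "1 / (A * sqrt (t - t0)) > 0" using A tp by simp
  have "\<bar>bornW \<gamma> \<beta> t0 0 x3 t\<bar> \<le> 1 / (A * sqrt (t - t0))"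
  proof -
    have "0 \<le> 1 / (A * sqrt (t - t0)) * exp (- (x3^2) / (4 * \<gamma> * (t - t0)))"
      using ex pos by simp
    then have "\<bar>bornW \<gamma> \<beta> t0 0 x3 t\<bar> = 1 / (A * sqrt (t - t0)) * exp (- (x3^2) / (4 * \<gamma> * (t - t0)))"
      unfolding w by (rule abs_of_nonneg)
    also have "\<dots> \<le> 1 / (A * sqrt (t - t0))"
      by (rule mult_left_le[OF ex(1)]) (use pos in simp)
    finally show ?thesis .
  qed
  also have "\<dots> = Mc \<gamma> \<beta> 0 * (t - t0) powr ((real 0 - 1)/2)"
  proof -
    have m0: "Mc \<gamma> \<beta> 0 = 1 / A"
    proof -
      have h: "(real 0 + 1)/2 = (1/2::real)" by simp
      have "Mc \<gamma> \<beta> 0 = 1 / A * 1 * sqrt pi / Gamma (1/2)"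
        unfolding Mc_def A_def h power_0 by (rule refl)
      also have "\<dots> = 1 / A" unfolding Gamma_one_half_real by simp
      finally show ?thesis .
    qed
    have p0: "(t - t0) powr ((real 0 - 1)/2) = 1 / sqrt (t - t0)"
    proof -
      have h: "(real 0 - 1)/2 = (-1/2::real)" by simp
      show ?thesis unfolding h by (rule powr_mhalf[OF tp])
    qed
    show ?thesis unfolding m0 p0 by simp
  qed
  finally show ?case .
next
  case (Suc n)
  have tp: "t - t0 > 0" using Suc by simp
  define F where "F s = bornW \<gamma> \<beta> t0 n 0 s / sqrt (t - s) * exp (- (x3^2) / (4 * \<gamma> * (t - s)))" for s
  have w: "bornW \<gamma> \<beta> t0 (Suc n) x3 t = (- \<beta> / sqrt (pi * \<gamma>)) * (LBINT s=t0..t. F s)"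
    using Suc.prems unfolding F_def by simp
  have Fb: "\<bar>F s\<bar> \<le> Mc \<gamma> \<beta> n * ((s - t0) powr ((real n - 1)/2) * (t - s) powr (-1/2))"
    if s: "t0 < s" "s < t" for s
  proof -
    have ts: "t - s > 0" using s by simp
    have ex: "exp (- (x3^2) / (4 * \<gamma> * (t - s))) \<le> 1" "exp (- (x3^2) / (4 * \<gamma> * (t - s))) > 0"
      using exp_neg_le1[of "x3^2" "4 * \<gamma> * (t - s)"] g ts by auto
    have IH: "\<bar>bornW \<gamma> \<beta> t0 n 0 s\<bar> \<le> Mc \<gamma> \<beta> n * (s - t0) powr ((real n - 1)/2)"
      using Suc.IH s by simp
    have "\<bar>F s\<bar> = \<bar>bornW \<gamma> \<beta> t0 n 0 s\<bar> / sqrt (t - s) * exp (- (x3^2) / (4 * \<gamma> * (t - s)))"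
      unfolding F_def using ex ts by (simp add: abs_mult)
    also have "\<dots> \<le> \<bar>bornW \<gamma> \<beta> t0 n 0 s\<bar> / sqrt (t - s)"
      by (rule mult_left_le[OF ex(1)]) (use ts in simp)
    also have "\<dots> \<le> Mc \<gamma> \<beta> n * (s - t0) powr ((real n - 1)/2) / sqrt (t - s)"
      using IH ts by (simp add: divide_right_mono)
    also have "\<dots> = Mc \<gamma> \<beta> n * ((s - t0) powr ((real n - 1)/2) * (t - s) powr (-1/2))"
      unfolding powr_mhalf[OF ts] by simp
    finally show ?thesis .
  qed
  have p: "(real n - 1)/2 > -1" by simp
  have L: "\<bar>LBINT s=t0..t. F s\<bar> \<le> Mc \<gamma> \<beta> n * ((t - t0) powr ((real n - 1)/2 + 1/2) * Beta ((real n - 1)/2 + 1) (1/2))"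
    by (rule lbint_bound[OF _ p Mc_nonneg[OF g b] Fb]) (use Suc.prems in auto)
  have e1: "(real n - 1)/2 + 1/2 = (real (Suc n) - 1)/2" by (simp add: field_simps)
  have e2: "(real n - 1)/2 + 1 = (real n + 1)/2" by (simp add: field_simps)
  have c0: "\<beta> / sqrt (pi * \<gamma>) \<ge> 0" using b g by simp
  have "\<bar>bornW \<gamma> \<beta> t0 (Suc n) x3 t\<bar> = \<beta> / sqrt (pi * \<gamma>) * \<bar>LBINT s=t0..t. F s\<bar>"
    unfolding w using c0 b g by (simp add: abs_mult)
  also have "\<dots> \<le> \<beta> / sqrt (pi * \<gamma>) * (Mc \<gamma> \<beta> n * ((t - t0) powr ((real (Suc n) - 1)/2) * Beta ((real n + 1)/2) (1/2)))"
    using L c0 unfolding e1 e2 by (rule mult_left_mono)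
  also have "\<dots> = Mc \<gamma> \<beta> (Suc n) * (t - t0) powr ((real (Suc n) - 1)/2)"
    unfolding Mc_Suc by (simp only: mult_ac)
  finally show ?case .
qed

lemma E_aux:
  fixes C k s G r :: real
  shows "C * k ^ n * s / G * r ^ n = (C * s) * ((k * r) ^ n / G)"
  by (simp add: power_mult_distrib mult_ac divide_inverse)

lemma E_summable:
  assumes g: "\<gamma> > 0" and b: "\<beta> \<ge> 0" and T: "T > 0"
  shows "summable (\<lambda>n. Mc \<gamma> \<beta> n * T powr (real n / 2))"
proof -
  define K where "K = (\<beta> / sqrt (pi * \<gamma>) * sqrt pi) * sqrt T"
  have K: "K \<ge> 0" unfolding K_def using b g T by simp
  have tn: "T powr (real n / 2) = sqrt T ^ n" for n
  proof -
    have "T powr (real n / 2) = (T powr (1/2)) powr (real n)" by (simp add: powr_powr)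
    also have "\<dots> = sqrt T powr (real n)" using T by (simp add: powr_half_sqrt)
    also have "\<dots> = sqrt T ^ n" by (rule powr_realpow) (use T in simp)
    finally show ?thesis .
  qed
  have eq: "Mc \<gamma> \<beta> n * T powr (real n / 2) =
      (1 / (4 * (pi * \<gamma>) powr (3/2)) * sqrt pi) * (K^n / Gamma ((real n + 1)/2))" for n
    unfolding Mc_def tn K_def by (rule E_aux)
  show ?thesis unfolding eq by (intro summable_mult summable_gamma K)
qed

lemma w_bound2:
  assumes g: "\<gamma> > 0" and b: "\<beta> \<ge> 0" and tt: "t0 < t"
  shows "\<bar>bornW \<gamma> \<beta> t0 n x3 t\<bar> \<le> (t - t0) powr (-1/2) * (Mc \<gamma> \<beta> n * (t - t0) powr (real n / 2))"
proof -
  have h: "(real n - 1)/2 = (-1/2) + real n / 2" by (simp add: field_simps)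
  have "(t - t0) powr ((real n - 1)/2) = (t - t0) powr (-1/2) * (t - t0) powr (real n / 2)"
    unfolding h by (rule powr_add)
  then show ?thesis using w_bound[OF g b tt, of n x3] by (simp add: mult_ac)
qed

lemma w_bound_unif:
  assumes g: "\<gamma> > 0" and b: "\<beta> \<ge> 0" and lo: "t0 < lo" "lo \<le> t" and hi: "t \<le> hi"
  shows "\<bar>bornW \<gamma> \<beta> t0 n x3 t\<bar> \<le> (lo - t0) powr (-1/2) * (Mc \<gamma> \<beta> n * (hi - t0) powr (real n / 2))"
proof -
  have tt: "t0 < t" using lo by simp
  have a1: "(t - t0) powr (-1/2) \<le> (lo - t0) powr (-1/2)"
  proof -
    have "sqrt (lo - t0) \<le> sqrt (t - t0)" using lo by simp
    moreover have "sqrt (lo - t0) > 0" using lo by simp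
    moreover have "sqrt (t - t0) > 0" using tt by simp
    ultimately have "1 / sqrt (t - t0) \<le> 1 / sqrt (lo - t0)"
      by (intro divide_left_mono mult_pos_pos) simp_all
    moreover have q1: "(t - t0) powr (-1/2) = 1 / sqrt (t - t0)" by (rule powr_mhalf) (use tt in simp)
    moreover have q2: "(lo - t0) powr (-1/2) = 1 / sqrt (lo - t0)" by (rule powr_mhalf) (use lo in simp)
    ultimately show ?thesis by simp
  qed
  have a2: "(t - t0) powr (real n / 2) \<le> (hi - t0) powr (real n / 2)"
    by (rule powr_mono2) (use tt hi in simp_all)
  have a3: "Mc \<gamma> \<beta> n * (t - t0) powr (real n / 2) \<le> Mc \<gamma> \<beta> n * (hi - t0) powr (real n / 2)"
    by (rule mult_left_mono[OF a2 Mc_nonneg[OF g b]])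
  have "\<bar>bornW \<gamma> \<beta> t0 n x3 t\<bar> \<le> (t - t0) powr (-1/2) * (Mc \<gamma> \<beta> n * (t - t0) powr (real n / 2))"
    by (rule w_bound2[OF g b tt])
  also have "\<dots> \<le> (lo - t0) powr (-1/2) * (Mc \<gamma> \<beta> n * (hi - t0) powr (real n / 2))"
    by (rule mult_mono[OF a1 a3]) (use Mc_nonneg[OF g b] in simp_all)
  finally show ?thesis .
qed

lemma V_bound:
  assumes g: "\<gamma> > 0" and b: "b \<ge> 0" and tt: "t0 < t"
  shows "\<bar>bornV \<gamma> b \<beta> t0 n x t\<bar> \<le> 1 / (t - t0) * \<bar>bornW \<gamma> \<beta> t0 n (x$3) t\<bar>"
proof -
  have tp: "t - t0 > 0" using tt by simp
  have e1: "exp (- b * (t - t0)) \<le> 1"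
  proof -
    have "- b * (t - t0) \<le> 0" using b tp by (simp add: mult_nonneg_nonneg)
    then show ?thesis by (subst exp_le_one_iff)
  qed
  have e2: "exp (- ((x$1)^2 + (x$2)^2) / (4 * \<gamma> * (t - t0))) \<le> 1"
    by (rule exp_neg_le1(1)) (use g tp in simp_all)
  define P where "P = exp (- b * (t - t0)) * exp (- ((x$1)^2 + (x$2)^2) / (4 * \<gamma> * (t - t0)))"
  have P0: "0 \<le> P" "P \<le> 1" unfolding P_def using e1 e2
    by (simp_all add: mult_le_one)
  have "bornV \<gamma> b \<beta> t0 n x t = P * (1 / (t - t0) * bornW \<gamma> \<beta> t0 n (x$3) t)"
    unfolding bornV_def P_def by (simp add: field_simps)
  then have "\<bar>bornV \<gamma> b \<beta> t0 n x t\<bar> = P * \<bar>1 / (t - t0) * bornW \<gamma> \<beta> t0 n (x$3) t\<bar>"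
    using P0 by (simp add: abs_mult)
  also have "\<dots> \<le> \<bar>1 / (t - t0) * bornW \<gamma> \<beta> t0 n (x$3) t\<bar>"
    by (rule mult_left_le_one_le) (use P0 in simp_all)
  also have "\<dots> = 1 / (t - t0) * \<bar>bornW \<gamma> \<beta> t0 n (x$3) t\<bar>"
    using tp by (simp add: abs_mult)
  finally show ?thesis .
qed

lemma compact_time_bounds:
  fixes K :: "('a::metric_space \<times> real) set"
  assumes K: "compact K" "K \<subseteq> A \<times> {t0<..}"
  shows "\<exists>lo hi. t0 < lo \<and> lo \<le> hi \<and> (\<forall>p\<in>K. lo \<le> snd p \<and> snd p \<le> hi)"
proof (cases "K = {}")
  case True
  then show ?thesis by (intro exI[of _ "t0 + 1"]) auto
next
  case False
  have c: "compact (snd ` K)" by (intro compact_continuous_image continuous_intros K(1))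
  have ne: "snd ` K \<noteq> {}" using False by simp
  obtain lo where lo: "lo \<in> snd ` K" "\<forall>y\<in>snd ` K. lo \<le> y" using compact_attains_inf[OF c ne] by blast
  obtain hi where hi: "hi \<in> snd ` K" "\<forall>y\<in>snd ` K. y \<le> hi" using compact_attains_sup[OF c ne] by blast
  have "t0 < lo" using lo(1) K(2) by auto
  moreover have "lo \<le> hi" using lo(2) hi(1) by blast
  ultimately show ?thesis using lo(2) hi(2) by blast
qed

theorem mainTheorem10:
  fixes \<gamma> b t0 \<beta> :: real
  assumes "\<gamma> > 0" and "b \<ge> 0" and "\<beta> \<ge> 0"
  shows "abs_loc_unif_series (\<lambda>n (x3, t). bornW \<gamma> \<beta> t0 n x3 t) ({0..} \<times> {t0<..})
       \<and> abs_loc_unif_series (\<lambda>n (x, t). bornV \<gamma> b \<beta> t0 n x t)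
            ({x :: real^3. x$3 \<ge> 0} \<times> {t0<..})"
proof -
  note g = assms(1) and bb = assms(2) and be = assms(3)
  have P1: "abs_loc_unif_series (\<lambda>n (x3, t). bornW \<gamma> \<beta> t0 n x3 t) ({0..} \<times> {t0<..})"
    unfolding abs_loc_unif_series_def
  proof (intro conjI ballI allI impI)
    fix p :: "real \<times> real" assume p: "p \<in> {0..} \<times> {t0<..}"
    obtain x3 t where pe: "p = (x3, t)" by (cases p)
    have tt: "t0 < t" using p pe by auto
    have s: "summable (\<lambda>n. (t - t0) powr (-1/2) * (Mc \<gamma> \<beta> n * (t - t0) powr (real n / 2)))"
      by (intro summable_mult E_summable g be) (use tt in simp)
    show "summable (\<lambda>n. \<bar>(case p of (x3, t) \<Rightarrow> bornW \<gamma> \<beta> t0 n x3 t)\<bar>)"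
      by (rule summable_comparison_test[OF _ s]) (use w_bound2[OF g be tt] pe in auto)
  next
    fix K :: "(real \<times> real) set" assume K: "compact K \<and> K \<subseteq> {0..} \<times> {t0<..}"
    obtain lo hi where lh: "t0 < lo" "lo \<le> hi" "\<forall>p\<in>K. lo \<le> snd p \<and> snd p \<le> hi"
      using compact_time_bounds[of K "{0..}" t0] K by blast
    show "uniform_limit K (\<lambda>N p. \<Sum>n<N. case p of (x3, t) \<Rightarrow> bornW \<gamma> \<beta> t0 n x3 t)
            (\<lambda>p. \<Sum>n. case p of (x3, t) \<Rightarrow> bornW \<gamma> \<beta> t0 n x3 t) sequentially"
    proof (rule Weierstrass_m_test[where M = "\<lambda>n. (lo - t0) powr (-1/2) * (Mc \<gamma> \<beta> n * (hi - t0) powr (real n / 2))"])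
      fix n and p :: "real \<times> real" assume pK: "p \<in> K"
      obtain x3 t where pe: "p = (x3, t)" by (cases p)
      have "lo \<le> t" "t \<le> hi" using lh(3) pK pe by auto
      then show "norm (case p of (x3, t) \<Rightarrow> bornW \<gamma> \<beta> t0 n x3 t) \<le>
          (lo - t0) powr (-1/2) * (Mc \<gamma> \<beta> n * (hi - t0) powr (real n / 2))"
        using w_bound_unif[OF g be lh(1)] pe by simp
    next
      show "summable (\<lambda>n. (lo - t0) powr (-1/2) * (Mc \<gamma> \<beta> n * (hi - t0) powr (real n / 2)))"
        by (intro summable_mult E_summable g be) (use lh in simp)
    qed
  qed
  have P2: "abs_loc_unif_series (\<lambda>n (x, t). bornV \<gamma> b \<beta> t0 n x t) ({x :: real^3. x$3 \<ge> 0} \<times> {t0<..})"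
    unfolding abs_loc_unif_series_def
  proof (intro conjI ballI allI impI)
    fix p :: "(real^3) \<times> real" assume p: "p \<in> {x :: real^3. x$3 \<ge> 0} \<times> {t0<..}"
    obtain x t where pe: "p = (x, t)" by (cases p)
    have tt: "t0 < t" using p pe by auto
    have s: "summable (\<lambda>n. 1 / (t - t0) * ((t - t0) powr (-1/2) * (Mc \<gamma> \<beta> n * (t - t0) powr (real n / 2))))"
      by (intro summable_mult E_summable g be) (use tt in simp)
    have bd: "\<bar>bornV \<gamma> b \<beta> t0 n x t\<bar> \<le> 1 / (t - t0) * ((t - t0) powr (-1/2) * (Mc \<gamma> \<beta> n * (t - t0) powr (real n / 2)))" for n
    proof -
      have "\<bar>bornV \<gamma> b \<beta> t0 n x t\<bar> \<le> 1 / (t - t0) * \<bar>bornW \<gamma> \<beta> t0 n (x$3) t\<bar>"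
        by (rule V_bound[OF g bb tt])
      also have "\<dots> \<le> 1 / (t - t0) * ((t - t0) powr (-1/2) * (Mc \<gamma> \<beta> n * (t - t0) powr (real n / 2)))"
        by (rule mult_left_mono[OF w_bound2[OF g be tt]]) (use tt in simp)
      finally show ?thesis .
    qed
    show "summable (\<lambda>n. \<bar>(case p of (x, t) \<Rightarrow> bornV \<gamma> b \<beta> t0 n x t)\<bar>)"
      by (rule summable_comparison_test[OF _ s]) (use bd pe in auto)
  next
    fix K :: "((real^3) \<times> real) set" assume K: "compact K \<and> K \<subseteq> {x :: real^3. x$3 \<ge> 0} \<times> {t0<..}"
    obtain lo hi where lh: "t0 < lo" "lo \<le> hi" "\<forall>p\<in>K. lo \<le> snd p \<and> snd p \<le> hi"
      using compact_time_bounds[of K "{x :: real^3. x$3 \<ge> 0}" t0] K by blast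
    show "uniform_limit K (\<lambda>N p. \<Sum>n<N. case p of (x, t) \<Rightarrow> bornV \<gamma> b \<beta> t0 n x t)
            (\<lambda>p. \<Sum>n. case p of (x, t) \<Rightarrow> bornV \<gamma> b \<beta> t0 n x t) sequentially"
    proof (rule Weierstrass_m_test[where M = "\<lambda>n. 1 / (lo - t0) * ((lo - t0) powr (-1/2) * (Mc \<gamma> \<beta> n * (hi - t0) powr (real n / 2)))"])
      fix n and p :: "(real^3) \<times> real" assume pK: "p \<in> K"
      obtain x t where pe: "p = (x, t)" by (cases p)
      have lt: "lo \<le> t" "t \<le> hi" using lh(3) pK pe by auto
      have tt: "t0 < t" using lt lh(1) by simp
      have m0: "0 \<le> (lo - t0) powr (-1/2) * (Mc \<gamma> \<beta> n * (hi - t0) powr (real n / 2))"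
        using Mc_nonneg[OF g be] by simp
      have "\<bar>bornV \<gamma> b \<beta> t0 n x t\<bar> \<le> 1 / (t - t0) * \<bar>bornW \<gamma> \<beta> t0 n (x$3) t\<bar>"
        by (rule V_bound[OF g bb tt])
      also have "\<dots> \<le> 1 / (lo - t0) * ((lo - t0) powr (-1/2) * (Mc \<gamma> \<beta> n * (hi - t0) powr (real n / 2)))"
      proof (rule mult_mono)
        show "1 / (t - t0) \<le> 1 / (lo - t0)" using lt lh(1) by (intro divide_left_mono mult_pos_pos) simp_all
        show "\<bar>bornW \<gamma> \<beta> t0 n (x$3) t\<bar> \<le> (lo - t0) powr (-1/2) * (Mc \<gamma> \<beta> n * (hi - t0) powr (real n / 2))"
          by (rule w_bound_unif[OF g be lh(1) lt])
        show "0 \<le> 1 / (lo - t0)" using lh(1) by simp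
        show "0 \<le> \<bar>bornW \<gamma> \<beta> t0 n (x$3) t\<bar>" by simp
      qed
      finally show "norm (case p of (x, t) \<Rightarrow> bornV \<gamma> b \<beta> t0 n x t) \<le>
          1 / (lo - t0) * ((lo - t0) powr (-1/2) * (Mc \<gamma> \<beta> n * (hi - t0) powr (real n / 2)))"
        using pe by simp
    next
      show "summable (\<lambda>n. 1 / (lo - t0) * ((lo - t0) powr (-1/2) * (Mc \<gamma> \<beta> n * (hi - t0) powr (real n / 2))))"
        by (intro summable_mult E_summable g be) (use lh in simp)
    qed
  qed
  show ?thesis using P1 P2 by blast
qed

end
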